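(* Let $\{\mathcal G,(\Gamma_0,\Gamma_1),(\widetilde\Gamma_0,\widetilde\Gamma_1)\}$ be a triple for the adjoint pair $\{S,\widetilde S\}$ satisfying (G), (D), (M), with $\rho(A_0)\neq\emptyset$, $\gamma$-fields $\gamma,\widetilde\gamma$ and Weyl functions $M,\widetilde M$. Let $B,\widetilde B$ be linear operators in $\mathcal G$, $\lambda\in\rho(A_0)$, $\mu\in\rho(\widetilde A_0)$. (i) If $\lambda\notin\sigma_p(A_B)$ and $f\in\mathfrak H$ satisfies $\widetilde\gamma(\overline\lambda)^*f\in\operatorname{dom}B$ and $B\widetilde\gamma(\overline\lambda)^*f\in\operatorname{ran}(I-BM(\lambda))$, then $f\in\operatorname{ran}(A_B-\lambda)$ and $(A_B-\lambda)^{-1}f=(A_0-\lambda)^{-1}f+\gamma(\lambda)(I-BM(\lambda))^{-1}B\widetilde\gamma(\overline\lambda)^*f$. (ii) If $\mu\notin\sigma_p(\widetilde A_{\widetilde B})$ and $g\in\mathfrak H$ satisfies $\gamma(\overline\mu)^*g\in\operatorname{dom}\widetilde B$ and $\widetilde B\gamma(\overline\mu)^*g\in\operatorname{ran}(I-\widetilde B\widetilde M(\mu))$, then $g\in\operatorname{ran}(\widetilde A_{\widetilde B}-\mu)$ and $(\widetilde A_{\widetilde B}-\mu)^{-1}g=(\widetilde A_0-\mu)^{-1}g+\widetilde\gamma(\mu)(I-\widetilde B\widetilde M(\mu))^{-1}\widetilde B\gamma(\overline\mu)^*g$.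
   Context: Let $\mathfrak H$ be a separable Hilbert space. An adjoint pair $\{S,\widetilde S\}$ consists of densely defined closed operators $S,\widetilde S$ in $\mathfrak H$ with $(Sf,g)=(f,\widetilde Sg)$ for all $f\in\operatorname{dom}S$, $g\in\operatorname{dom}\widetilde S$. Fix operators $T\subset S^*$ and $\widetilde T\subset\widetilde S^*$ which are cores, i.e. $\overline T=S^*$ and $\overline{\widetilde T}=\widetilde S^*$. A triple $\{\mathcal G,(\Gamma_0,\Gamma_1),(\widetilde\Gamma_0,\widetilde\Gamma_1)\}$ for $\{S,\widetilde S\}$ consists of a Hilbert space $\mathcal G$ and linear maps $\Gamma_0,\Gamma_1:\operatorname{dom}T\to\mathcal G$, $\widetilde\Gamma_0,\widetilde\Gamma_1:\operatorname{dom}\widetilde T\to\mathcal G$. Put $A_0:=T\upharpoonright\ker\Gamma_0$ and $\widetilde A_0:=\widetilde T\upharpoonright\ker\widetilde\Gamma_0$. Conditions: (G) $(Tf,g)_{\mathfrak H}-(f,\widetilde Tg)_{\mathfrak H}=(\Gamma_1f,\widetilde\Gamma_0g)_{\mathcal G}-(\Gamma_0f,\widetilde\Gamma_1g)_{\mathcal G}$ for all $f\in\operatorname{dom}T$, $g\in\operatorname{dom}\widetilde T$; (D) $\operatorname{ran}\Gamma_0$ and $\operatorname{ran}\widetilde\Gamma_0$ are dense in $\mathcal G$; (M) $A_0^*=\widetilde A_0$ and $\widetilde A_0^*=A_0$. For $\lambda\in\rho(A_0)$ one has $\operatorname{dom}T=\ker\Gamma_0\dotplus\ker(T-\lambda)$,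 so $\Gamma_0\upharpoonright\ker(T-\lambda)$ is injective; similarly for $\widetilde T$. The $\gamma$-fields are $\gamma(\lambda):=(\Gamma_0\upharpoonright\ker(T-\lambda))^{-1}$, $\widetilde\gamma(\mu):=(\widetilde\Gamma_0\upharpoonright\ker(\widetilde T-\mu))^{-1}$; the Weyl functions are $M(\lambda):=\Gamma_1\gamma(\lambda)$, $\lambda\in\rho(A_0)$, and $\widetilde M(\mu):=\widetilde\Gamma_1\widetilde\gamma(\mu)$, $\mu\in\rho(\widetilde A_0)$. Products of operators have their natural domains, and $(I-BM(\lambda))^{-1}$ denotes the inverse of the injective operator $I-BM(\lambda)$ on its range. Define $A_Bf:=Tf$ on $\operatorname{dom}A_B:=\{f\in\operatorname{dom}T:\Gamma_1f\in\operatorname{dom}B,\ B\Gamma_1f=\Gamma_0f\}$ and $\widetilde A_{\widetilde B}g:=\widetilde Tg$ on $\operatorname{dom}\widetilde A_{\widetilde B}:=\{g\in\operatorname{dom}\widetilde T:\widetilde\Gamma_1g\in\operatorname{dom}\widetilde B,\ \widetilde B\widetilde\Gamma_1g=\widetilde\Gamma_0g\}$. $\sigma_p$ denotes the set of eigenvalues. *)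

theory Defs
  imports "HOL-Analysis.Analysis"
begin

text \<open>The distribution has no complex inner product spaces, so we introduce them as a
  type class: a real normed vector space with a compatible complex scalar multiplication
  and a complex inner product (linear in the first, conjugate-linear in the second
  argument) inducing the norm.\<close>

class complex_inner = real_normed_vector +
  fixes scaleC :: "complex \<Rightarrow> 'a \<Rightarrow> 'a" (infixr \<open>*\<^sub>C\<close> 75)
    and cinner :: "'a \<Rightarrow> 'a \<Rightarrow> complex"
  assumes scaleC_add_right: "c *\<^sub>C (x + y) = c *\<^sub>C x + c *\<^sub>C y"
    and scaleC_add_left: "(b + c) *\<^sub>C x = b *\<^sub>C x + c *\<^sub>C x"
    and scaleC_scaleC: "b *\<^sub>C (c *\<^sub>C x) = (b * c) *\<^sub>C x"
    and scaleC_one: "1 *\<^sub>C x = x"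
    and scaleR_scaleC: "scaleR r x = complex_of_real r *\<^sub>C x"
    and cinner_add_left: "cinner (x + y) z = cinner x z + cinner y z"
    and cinner_scaleC_left: "cinner (c *\<^sub>C x) y = c * cinner x y"
    and cinner_commute: "cinner y x = cnj (cinner x y)"
    and cinner_self_nonneg: "Im (cinner x x) = 0 \<and> Re (cinner x x) \<ge> 0"
    and cinner_self_eq_zero: "cinner x x = 0 \<longleftrightarrow> x = 0"
    and norm_eq_sqrt_cinner: "norm x = sqrt (Re (cinner x x))"

class complex_hilbert = complex_inner + complete_space

text \<open>An operator from 'a to 'b is represented by its graph, a set of pairs.\<close>

definition csubspace :: "'a::complex_inner set \<Rightarrow> bool" where
  "csubspace U \<longleftrightarrow> 0 \<in> U \<and> (\<forall>x\<in>U. \<forall>y\<in>U. x + y \<in> U) \<and> (\<forall>c. \<forall>x\<in>U. c *\<^sub>C x \<in> U)"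

definition linear_rel :: "('a::complex_inner \<times> 'b::complex_inner) set \<Rightarrow> bool" where
  "linear_rel R \<longleftrightarrow> (0, 0) \<in> R \<and>
     (\<forall>x y u v. (x, y) \<in> R \<longrightarrow> (u, v) \<in> R \<longrightarrow> (x + u, y + v) \<in> R) \<and>
     (\<forall>c x y. (x, y) \<in> R \<longrightarrow> (c *\<^sub>C x, c *\<^sub>C y) \<in> R)"

definition lin_op :: "('a::complex_inner \<times> 'b::complex_inner) set \<Rightarrow> bool" where
  "lin_op R \<longleftrightarrow> linear_rel R \<and> single_valued R"

definition densely_defined :: "('a::complex_inner \<times> 'b::complex_inner) set \<Rightarrow> bool" where
  "densely_defined R \<longleftrightarrow> closure (Domain R) = UNIV"

definition closed_op :: "('a::complex_inner \<times> 'b::complex_inner) set \<Rightarrow> bool" where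
  "closed_op R \<longleftrightarrow> lin_op R \<and> closed R"

definition adj :: "('a::complex_inner \<times> 'b::complex_inner) set \<Rightarrow> ('b \<times> 'a) set" where
  "adj R = {(g, h). \<forall>(f, k) \<in> R. cinner k g = cinner f h}"

definition adjoint_pair :: "('a::complex_inner \<times> 'a) set \<Rightarrow> ('a \<times> 'a) set \<Rightarrow> bool" where
  "adjoint_pair S St \<longleftrightarrow> closed_op S \<and> closed_op St \<and> densely_defined S \<and> densely_defined St \<and>
     (\<forall>(f, u) \<in> S. \<forall>(g, v) \<in> St. cinner u g = cinner f v)"

definition rel_app :: "('a \<times> 'b) set \<Rightarrow> 'a \<Rightarrow> 'b" where
  "rel_app R x = (THE y. (x, y) \<in> R)"

definition op_shift :: "('a::complex_inner \<times> 'a) set \<Rightarrow> complex \<Rightarrow> ('a \<times> 'a) set" where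
  "op_shift A l = {(x, y - l *\<^sub>C x) | x y. (x, y) \<in> A}"

definition ident_minus :: "('a::complex_inner \<times> 'a) set \<Rightarrow> ('a \<times> 'a) set" where
  "ident_minus R = {(x, x - y) | x y. (x, y) \<in> R}"

definition graph_on :: "'a set \<Rightarrow> ('a \<Rightarrow> 'b) \<Rightarrow> ('a \<times> 'b) set" where
  "graph_on D F = {(x, F x) | x. x \<in> D}"

definition lin_on :: "'a::complex_inner set \<Rightarrow> ('a \<Rightarrow> 'b::complex_inner) \<Rightarrow> bool" where
  "lin_on D F \<longleftrightarrow> (\<forall>x\<in>D. \<forall>y\<in>D. F (x + y) = F x + F y) \<and> (\<forall>c. \<forall>x\<in>D. F (c *\<^sub>C x) = c *\<^sub>C F x)"

definition point_spectrum :: "('a::complex_inner \<times> 'a) set \<Rightarrow> complex set" where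
  "point_spectrum A = {l. \<exists>x. x \<noteq> 0 \<and> (x, l *\<^sub>C x) \<in> A}"

definition resolvent_set :: "('a::complex_inner \<times> 'a) set \<Rightarrow> complex set" where
  "resolvent_set A = {l. single_valued (converse (op_shift A l)) \<and> Range (op_shift A l) = UNIV \<and>
      (\<exists>C. \<forall>(x, y) \<in> op_shift A l. norm x \<le> C * norm y)}"

text \<open>\<open>T\<close> is given by its domain \<open>domT\<close> and action \<open>T\<close>; it is a core of \<open>S*\<close>.\<close>
definition core_of :: "'a::complex_inner set \<Rightarrow> ('a \<Rightarrow> 'a) \<Rightarrow> ('a \<times> 'a) set \<Rightarrow> bool" where
  "core_of domT T Sadj \<longleftrightarrow> csubspace domT \<and> lin_on domT T \<and>
     graph_on domT T \<subseteq> Sadj \<and> closure (graph_on domT T) = Sadj"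

definition A0_op :: "'a set \<Rightarrow> ('a \<Rightarrow> 'a) \<Rightarrow> ('a \<Rightarrow> 'b::zero) \<Rightarrow> ('a \<times> 'a) set" where
  "A0_op domT T G0 = graph_on {f \<in> domT. G0 f = 0} T"

definition gamma_field :: "'a::complex_inner set \<Rightarrow> ('a \<Rightarrow> 'a) \<Rightarrow> ('a \<Rightarrow> 'b) \<Rightarrow> complex \<Rightarrow> ('b \<times> 'a) set" where
  "gamma_field domT T G0 l = converse (graph_on {f \<in> domT. T f = l *\<^sub>C f} G0)"

definition weyl_fun :: "'a::complex_inner set \<Rightarrow> ('a \<Rightarrow> 'a) \<Rightarrow> ('a \<Rightarrow> 'b) \<Rightarrow> ('a \<Rightarrow> 'b) \<Rightarrow> complex \<Rightarrow> ('b \<times> 'b) set" where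
  "weyl_fun domT T G0 G1 l = gamma_field domT T G0 l O graph_on domT G1"

definition A_B_op :: "'a set \<Rightarrow> ('a \<Rightarrow> 'a) \<Rightarrow> ('a \<Rightarrow> 'b) \<Rightarrow> ('a \<Rightarrow> 'b) \<Rightarrow> ('b \<times> 'b) set \<Rightarrow> ('a \<times> 'a) set" where
  "A_B_op domT T G0 G1 B = graph_on {f \<in> domT. G1 f \<in> Domain B \<and> rel_app B (G1 f) = G0 f} T"

end

theory Submission
  imports Defs
begin

lemma scaleC_zero_left[simp]: "(0::complex) *\<^sub>C (x::'a::complex_inner) = 0"
  using scaleR_scaleC[of 0 x] by simp
lemma scaleC_minus1[simp]: "(-1::complex) *\<^sub>C (x::'a::complex_inner) = -x"
proof -
  have "(-1::real) *\<^sub>R x = complex_of_real (-1) *\<^sub>C x" by (rule scaleR_scaleC)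
  thus ?thesis by simp
qed
lemma scaleC_zero_right[simp]: "c *\<^sub>C (0::'a::complex_inner) = 0"
proof -
  have "c *\<^sub>C (0::'a) = c *\<^sub>C (0 + 0)" by simp
  also have "\<dots> = c *\<^sub>C 0 + c *\<^sub>C 0" by (rule scaleC_add_right)
  finally show ?thesis by simp
qed


lemma scaleC_minus_right: "c *\<^sub>C (- (x::'a::complex_inner)) = - (c *\<^sub>C x)"
proof -
  have "c *\<^sub>C (- x) = c *\<^sub>C ((-1) *\<^sub>C x)" by simp
  also have "\<dots> = (c * -1) *\<^sub>C x" by (rule scaleC_scaleC)
  also have "\<dots> = (-1 * c) *\<^sub>C x" by simp
  also have "\<dots> = (-1) *\<^sub>C (c *\<^sub>C x)" by (rule scaleC_scaleC[symmetric])
  finally show ?thesis by simp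
qed
lemma scaleC_diff_right: "c *\<^sub>C ((x::'a::complex_inner) - y) = c *\<^sub>C x - c *\<^sub>C y"
  unfolding diff_conv_add_uminus scaleC_add_right scaleC_minus_right ..
lemma scaleC_minus_left: "(- c) *\<^sub>C (x::'a::complex_inner) = - (c *\<^sub>C x)"
proof -
  have "(- c) *\<^sub>C x = (-1 * c) *\<^sub>C x" by simp
  also have "\<dots> = (-1) *\<^sub>C (c *\<^sub>C x)" by (rule scaleC_scaleC[symmetric])
  finally show ?thesis by simp
qed
lemma scaleC_diff_left: "(b - c) *\<^sub>C (x::'a::complex_inner) = b *\<^sub>C x - c *\<^sub>C x"
  unfolding diff_conv_add_uminus scaleC_add_left scaleC_minus_left ..
lemma cinner_zero_left[simp]: "cinner (0::'a::complex_inner) y = 0"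
proof -
  have "cinner ((0::complex) *\<^sub>C (0::'a)) y = 0 * cinner 0 y" by (rule cinner_scaleC_left)
  thus ?thesis by simp
qed
lemma cinner_zero_right[simp]: "cinner (y::'a::complex_inner) 0 = 0"
proof -
  have "cinner y 0 = cnj (cinner 0 y)" by (rule cinner_commute)
  thus ?thesis by simp
qed
lemma cinner_scaleC_right: "cinner (x::'a::complex_inner) (c *\<^sub>C y) = cnj c * cinner x y"
proof -
  have "cinner x (c *\<^sub>C y) = cnj (cinner (c *\<^sub>C y) x)" by (rule cinner_commute)
  also have "\<dots> = cnj (c * cinner y x)" by (simp only: cinner_scaleC_left)
  also have "\<dots> = cnj c * cnj (cinner y x)" by simp
  also have "cnj (cinner y x) = cinner x y" by (rule cinner_commute[symmetric])
  finally show ?thesis .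
qed
lemma cinner_add_right: "cinner (x::'a::complex_inner) (y + z) = cinner x y + cinner x z"
proof -
  have "cinner x (y + z) = cnj (cinner (y + z) x)" by (rule cinner_commute)
  also have "\<dots> = cnj (cinner y x + cinner z x)" by (simp only: cinner_add_left)
  also have "\<dots> = cnj (cinner y x) + cnj (cinner z x)" by simp
  also have "\<dots> = cinner x y + cinner x z" by (simp only: cinner_commute[symmetric])
  finally show ?thesis .
qed
lemma cinner_minus_left: "cinner (- (x::'a::complex_inner)) y = - cinner x y"
proof -
  have "cinner ((-1) *\<^sub>C x) y = (-1) * cinner x y" by (rule cinner_scaleC_left)
  thus ?thesis by simp
qed
lemma cinner_minus_right: "cinner (x::'a::complex_inner) (- y) = - cinner x y"
proof -
  have "cinner x ((-1) *\<^sub>C y) = cnj (-1) * cinner x y" by (rule cinner_scaleC_right)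
  thus ?thesis by simp
qed
lemma cinner_diff_left: "cinner ((x::'a::complex_inner) - y) z = cinner x z - cinner y z"
  unfolding diff_conv_add_uminus cinner_add_left cinner_minus_left ..
lemma cinner_diff_right: "cinner (x::'a::complex_inner) (y - z) = cinner x y - cinner x z"
  unfolding diff_conv_add_uminus cinner_add_right cinner_minus_right ..
lemma cinner_self: "cinner (x::'a::complex_inner) x = complex_of_real ((norm x)^2)"
proof -
  have a: "Im (cinner x x) = 0" "Re (cinner x x) \<ge> 0" using cinner_self_nonneg by auto
  have "norm x = sqrt (Re (cinner x x))" by (rule norm_eq_sqrt_cinner)
  hence "(norm x)^2 = Re (cinner x x)" using a by simp
  with a show ?thesis by (simp add: complex_eq_iff)
qed


lemma cauchy_schwarz: "cmod (cinner (x::'a::complex_inner) y) \<le> norm x * norm y"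
proof (cases "y = 0")
  case True then show ?thesis by simp
next
  case False
  define a where "a = cinner x y"
  define N where "N = (norm y)^2"
  have Npos: "N > 0" using False by (simp add: N_def)
  define t where "t = a / complex_of_real N"
  have yy: "cinner y y = complex_of_real N" by (simp add: cinner_self N_def)
  have yx: "cinner y x = cnj a" by (simp add: a_def cinner_commute[of y x])
  have "cinner (x - t *\<^sub>C y) (x - t *\<^sub>C y) = cinner x x - cnj t * a - t * cnj a + t * cnj t * complex_of_real N"
    by (simp add: cinner_diff_left cinner_diff_right cinner_scaleC_left cinner_scaleC_right yy yx a_def[symmetric] algebra_simps)
  also have "\<dots> = cinner x x - a * cnj a / complex_of_real N"
    using Npos by (simp add: t_def field_simps)
  also have "\<dots> = complex_of_real ((norm x)^2 - (cmod a)^2 / N)"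
    using complex_norm_square[of a] by (simp add: cinner_self)
  finally have e: "cinner (x - t *\<^sub>C y) (x - t *\<^sub>C y) = complex_of_real ((norm x)^2 - (cmod a)^2 / N)" .
  have "0 \<le> Re (cinner (x - t *\<^sub>C y) (x - t *\<^sub>C y))"
    using cinner_self_nonneg[of "x - t *\<^sub>C y"] by simp
  hence "0 \<le> (norm x)^2 - (cmod a)^2 / N" unfolding e by simp
  hence "(cmod a)^2 \<le> (norm x)^2 * N" using Npos by (simp add: field_simps)
  hence "(cmod a)^2 \<le> (norm x * norm y)^2" by (simp add: N_def power_mult_distrib)
  hence "cmod a \<le> norm x * norm y" by (rule power2_le_imp_le) simp
  thus ?thesis unfolding a_def .
qed

lemma parallelogram:
  "(norm ((a::'a::complex_inner) + b))^2 + (norm (a - b))^2 = 2 * (norm a)^2 + 2 * (norm b)^2"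
proof -
  have "complex_of_real ((norm (a + b))^2 + (norm (a - b))^2) = cinner (a+b) (a+b) + cinner (a-b) (a-b)"
    by (simp add: cinner_self)
  also have "\<dots> = 2 * cinner a a + 2 * cinner b b"
    by (simp add: cinner_add_left cinner_add_right cinner_diff_left cinner_diff_right algebra_simps)
  also have "\<dots> = complex_of_real (2 * (norm a)^2 + 2 * (norm b)^2)"
    by (simp add: cinner_self)
  finally show ?thesis by (simp only: of_real_eq_iff)
qed


lemma cinner_tendsto_right:
  fixes X :: "nat \<Rightarrow> 'a::complex_inner"
  assumes "X \<longlonglongrightarrow> a"
  shows "(\<lambda>n. cinner c (X n)) \<longlonglongrightarrow> cinner c a"
proof -
  have "(\<lambda>n. X n - a) \<longlonglongrightarrow> 0" by (rule LIM_zero[OF assms])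
  hence "(\<lambda>n. norm (X n - a)) \<longlonglongrightarrow> 0" by (rule tendsto_norm_zero)
  hence g: "(\<lambda>n. norm c * norm (X n - a)) \<longlonglongrightarrow> 0"
    using tendsto_mult[OF tendsto_const[of "norm c"]] by fastforce
  have b: "\<And>n. norm (cinner c (X n) - cinner c a) \<le> norm c * norm (X n - a)"
  proof -
    fix n
    have "cinner c (X n) - cinner c a = cinner c (X n - a)" by (rule cinner_diff_right[symmetric])
    thus "norm (cinner c (X n) - cinner c a) \<le> norm c * norm (X n - a)"
      using cauchy_schwarz[of c "X n - a"] by simp
  qed
  have "(\<lambda>n. cinner c (X n) - cinner c a) \<longlonglongrightarrow> 0"
    by (rule Lim_null_comparison[OF always_eventually g]) (use b in blast)
  thus ?thesis by (rule LIM_zero_cancel)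
qed

lemma cinner_tendsto_left:
  fixes X :: "nat \<Rightarrow> 'a::complex_inner"
  assumes "X \<longlonglongrightarrow> a"
  shows "(\<lambda>n. cinner (X n) c) \<longlonglongrightarrow> cinner a c"
proof -
  have "(\<lambda>n. cnj (cinner c (X n))) \<longlonglongrightarrow> cnj (cinner c a)"
    using cinner_tendsto_right[OF assms] by (rule tendsto_cnj)
  moreover have "\<And>n. cnj (cinner c (X n)) = cinner (X n) c" by (rule cinner_commute[symmetric])
  moreover have "cnj (cinner c a) = cinner a c" by (rule cinner_commute[symmetric])
  ultimately show ?thesis by simp
qed



lemma norm_sq_cinner: "(norm (x::'a::complex_inner))^2 = Re (cinner x x)"
  by (simp add: cinner_self)

lemma csubspace_diff: "csubspace U \<Longrightarrow> x \<in> U \<Longrightarrow> y \<in> U \<Longrightarrow> x - y \<in> U"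
proof -
  assume U: "csubspace U" "x \<in> U" "y \<in> U"
  hence "(-1) *\<^sub>C y \<in> U" unfolding csubspace_def by blast
  hence "- y \<in> U" by simp
  with U show ?thesis unfolding csubspace_def diff_conv_add_uminus by blast
qed

lemma min_orth:
  fixes V :: "'a::complex_inner set"
  assumes V: "csubspace V" and v: "v \<in> V"
    and mn: "\<forall>u\<in>V. (norm (x - v))^2 \<le> (norm (x - u))^2"
    and w: "w \<in> V"
  shows "cinner (x - v) w = 0"
proof (rule ccontr)
  define q where "q = x - v"
  define c where "c = cinner q w"
  assume "cinner (x - v) w \<noteq> 0"
  hence c0: "c \<noteq> 0" by (simp add: c_def q_def)
  define s :: real where "s = 1 / ((norm w)^2 + 1)"
  have np: "0 < (norm w)^2 + 1" using zero_le_power2[of "norm w"] by linarith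
  have spos: "s > 0" unfolding s_def using np by simp
  have sw: "s * (norm w)^2 < 1" unfolding s_def using np by (simp add: field_simps)
  define t where "t = complex_of_real s * c"
  have "t *\<^sub>C w \<in> V" using V w unfolding csubspace_def by blast
  hence "v + t *\<^sub>C w \<in> V" using V v unfolding csubspace_def by blast
  with mn have le: "(norm q)^2 \<le> (norm (q - t *\<^sub>C w))^2"
    unfolding q_def by (metis diff_diff_eq)
  have wq: "cinner w q = cnj c" by (simp add: c_def cinner_commute[of w q])
  have "cinner (q - t *\<^sub>C w) (q - t *\<^sub>C w) = cinner q q - cnj t * c - t * cnj c + t * cnj t * cinner w w"
    by (simp add: cinner_diff_left cinner_diff_right cinner_scaleC_left cinner_scaleC_right wq c_def[symmetric] algebra_simps)
  also have "\<dots> = cinner q q - complex_of_real (s * (cmod c)^2 * (2 - s * (norm w)^2))"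
  proof -
    have cc: "c * cnj c = complex_of_real ((cmod c)^2)" using complex_norm_square[of c] by simp
    have e1: "cnj t * c = complex_of_real s * (c * cnj c)" by (simp add: t_def)
    have e2: "t * cnj c = complex_of_real s * (c * cnj c)" by (simp add: t_def)
    have e3: "t * cnj t = complex_of_real s * complex_of_real s * (c * cnj c)" by (simp add: t_def)
    show ?thesis unfolding e1 e2 e3 cc cinner_self[of w]
      by (simp add: algebra_simps)
  qed
  finally have "(norm (q - t *\<^sub>C w))^2 = (norm q)^2 - s * (cmod c)^2 * (2 - s * (norm w)^2)"
    by (simp add: norm_sq_cinner)
  moreover have "s * (cmod c)^2 * (2 - s * (norm w)^2) > 0"
    using spos c0 sw by (intro mult_pos_pos) auto
  ultimately show False using le by linarith
qed

lemma projection: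
  fixes V :: "'a::complex_hilbert set"
  assumes V: "csubspace V" and cl: "closed V"
  shows "\<exists>v\<in>V. \<forall>w\<in>V. cinner (x - v) w = 0"
proof -
  define F where "F = (\<lambda>v. (norm (x - v))^2)"
  define d where "d = Inf (F ` V)"
  have ne: "F ` V \<noteq> {}" using V unfolding csubspace_def by blast
  have bdd: "bdd_below (F ` V)" unfolding F_def by (rule bdd_belowI[of _ 0]) auto
  have low: "\<And>u. u \<in> V \<Longrightarrow> d \<le> F u" unfolding d_def by (rule cInf_lower) (use bdd in auto)
  have "\<forall>n. \<exists>v\<in>V. F v < d + inverse (real (Suc n))"
  proof
    fix n
    have "Inf (F ` V) < d + inverse (real (Suc n))" unfolding d_def by simp
    from cInf_lessD[OF ne this] show "\<exists>v\<in>V. F v < d + inverse (real (Suc n))" by auto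
  qed
  then obtain s where s: "\<And>n. s n \<in> V" "\<And>n. F (s n) < d + inverse (real (Suc n))"
    by metis
  have mid: "\<And>a b. a \<in> V \<Longrightarrow> b \<in> V \<Longrightarrow> (1/2::real) *\<^sub>R (a + b) \<in> V"
  proof -
    fix a b assume "a \<in> V" "b \<in> V"
    hence "complex_of_real (1/2) *\<^sub>C (a + b) \<in> V" using V unfolding csubspace_def by blast
    thus "(1/2::real) *\<^sub>R (a + b) \<in> V" by (simp add: scaleR_scaleC)
  qed
  have key: "\<And>m n. (norm (s m - s n))^2 \<le> 2 * inverse (real (Suc m)) + 2 * inverse (real (Suc n))"
  proof -
    fix m n
    define a where "a = x - s m"
    define b where "b = x - s n"
    have ab: "a + b = 2 *\<^sub>R (x - (1/2::real) *\<^sub>R (s m + s n))"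
      by (simp add: a_def b_def algebra_simps scaleR_2)
    have "(norm (a + b))^2 = 4 * F ((1/2::real) *\<^sub>R (s m + s n))"
      unfolding ab F_def by (simp add: power2_eq_square)
    also have "\<dots> \<ge> 4 * d" using low[OF mid[OF s(1) s(1)]] by simp
    finally have "(norm (a + b))^2 \<ge> 4 * d" .
    moreover have "(norm (a - b))^2 = 2 * (norm a)^2 + 2 * (norm b)^2 - (norm (a + b))^2"
      using parallelogram[of a b] by simp
    moreover have "a - b = s n - s m" by (simp add: a_def b_def)
    ultimately have "(norm (s n - s m))^2 = 2 * (norm a)^2 + 2 * (norm b)^2 - (norm (a + b))^2"
      and "(norm (a + b))^2 \<ge> 4 * d" by simp_all
    moreover have "(norm a)^2 < d + inverse (real (Suc m))" using s(2)[of m] by (simp add: a_def F_def)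
    moreover have "(norm b)^2 < d + inverse (real (Suc n))" using s(2)[of n] by (simp add: b_def F_def)
    ultimately have "(norm (s n - s m))^2 \<le> 2 * inverse (real (Suc m)) + 2 * inverse (real (Suc n))"
      by linarith
    thus "(norm (s m - s n))^2 \<le> 2 * inverse (real (Suc m)) + 2 * inverse (real (Suc n))"
      by (simp add: norm_minus_commute)
  qed
  have "Cauchy s"
  proof (rule metric_CauchyI)
    fix e :: real assume e: "e > 0"
    obtain M :: nat where M: "inverse (real (Suc M)) < e^2 / 4"
      using reals_Archimedean[of "e^2/4"] e by auto
    show "\<exists>M. \<forall>m\<ge>M. \<forall>n\<ge>M. dist (s m) (s n) < e"
    proof (intro exI allI impI)
      fix m n assume mM: "m \<ge> M" and nM: "n \<ge> M"
      have im: "inverse (real (Suc m)) \<le> inverse (real (Suc M))"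
        using mM by (simp add: le_imp_inverse_le)
      have inn: "inverse (real (Suc n)) \<le> inverse (real (Suc M))"
        using nM by (simp add: le_imp_inverse_le)
      have "(norm (s m - s n))^2 < e^2"
        using key[of m n] im inn M by linarith
      hence "(dist (s m) (s n))^2 < e^2" by (simp add: dist_norm)
      thus "dist (s m) (s n) < e" using e by (simp add: power_less_imp_less_base)
    qed
  qed
  hence "convergent s" by (rule Cauchy_convergent)
  then obtain v where lim: "s \<longlonglongrightarrow> v" unfolding convergent_def by blast
  have vV: "v \<in> V" using closed_sequentially[OF cl] s(1) lim by blast
  have "(\<lambda>n. F (s n)) \<longlonglongrightarrow> F v" unfolding F_def by (intro tendsto_intros lim)
  moreover have "(\<lambda>n. d + inverse (real (Suc n))) \<longlonglongrightarrow> d + 0"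
    by (intro tendsto_intros LIMSEQ_inverse_real_of_nat)
  ultimately have "F v \<le> d + 0"
    by (rule LIMSEQ_le) (use s(2) less_imp_le in blast)
  hence "\<forall>u\<in>V. (norm (x - v))^2 \<le> (norm (x - u))^2"
    using low unfolding F_def by (metis add_0_right order_trans)
  with V vV show ?thesis using min_orth by blast
qed

lemma orth_complete:
  fixes V :: "'a::complex_hilbert set"
  assumes V: "csubspace V" and cl: "closed V"
    and triv: "\<And>q. (\<forall>w\<in>V. cinner q w = 0) \<Longrightarrow> q = 0"
  shows "V = UNIV"
proof -
  have "x \<in> V" for x
  proof -
    obtain v where "v \<in> V" "\<forall>w\<in>V. cinner (x - v) w = 0" using projection[OF V cl] by blast
    hence "x - v = 0" using triv by blast
    thus ?thesis using \<open>v \<in> V\<close> by simp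
  qed
  thus ?thesis by blast
qed



lemma adj_iff: "(g, h) \<in> adj R \<longleftrightarrow> (\<forall>f k. (f, k) \<in> R \<longrightarrow> cinner k g = cinner f h)"
  unfolding adj_def by auto

lemma op_shift_iff: "(x, z) \<in> op_shift A l \<longleftrightarrow> (x, z + l *\<^sub>C x) \<in> A"
  unfolding op_shift_def by force

lemma adj_zero: "(0, 0) \<in> adj R"
  unfolding adj_iff by simp

lemma adj_add: "(g1, h1) \<in> adj R \<Longrightarrow> (g2, h2) \<in> adj R \<Longrightarrow> (g1 + g2, h1 + h2) \<in> adj R"
  unfolding adj_iff by (simp add: cinner_add_right)

lemma adj_scale: "(g, h) \<in> adj R \<Longrightarrow> (c *\<^sub>C g, c *\<^sub>C h) \<in> adj R"
  unfolding adj_iff by (simp add: cinner_scaleC_right)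

lemma adj_diff: "(g1, h1) \<in> adj R \<Longrightarrow> (g2, h2) \<in> adj R \<Longrightarrow> (g1 - g2, h1 - h2) \<in> adj R"
  unfolding adj_iff by (simp add: cinner_diff_right)

lemma scaleC_comm: "a *\<^sub>C (b *\<^sub>C (x::'a::complex_inner)) = b *\<^sub>C (a *\<^sub>C x)"
  by (simp add: scaleC_scaleC mult.commute)

lemma adj_shift_surj:
  fixes A :: "('a::complex_hilbert \<times> 'a) set"
  assumes AA: "adj (adj A) = A" and l: "l \<in> resolvent_set A"
  shows "Range (op_shift (adj A) (cnj l)) = UNIV"
proof -
  define V where "V = Range (op_shift (adj A) (cnj l))"
  have Vmem: "\<And>k. k \<in> V \<longleftrightarrow> (\<exists>z. (z, k + cnj l *\<^sub>C z) \<in> adj A)"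
    unfolding V_def Range_iff op_shift_iff ..
  have surjA: "Range (op_shift A l) = UNIV" and "\<exists>C. \<forall>(x, y) \<in> op_shift A l. norm x \<le> C * norm y"
    using l unfolding resolvent_set_def by auto
  then obtain C0 where C0: "\<forall>(x, y) \<in> op_shift A l. norm x \<le> C0 * norm y" by blast
  define C where "C = max C0 0"
  have Cnn: "C \<ge> 0" by (simp add: C_def)
  have bA: "\<And>x y. (x, y) \<in> op_shift A l \<Longrightarrow> norm x \<le> C * norm y"
  proof -
    fix x y assume "(x, y) \<in> op_shift A l"
    hence "norm x \<le> C0 * norm y" using C0 by blast
    also have "\<dots> \<le> C * norm y" by (simp add: C_def mult_right_mono)
    finally show "norm x \<le> C * norm y" .
  qed
  have bound: "\<And>z k. (z, k + cnj l *\<^sub>C z) \<in> adj A \<Longrightarrow> norm z \<le> C * norm k"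
  proof -
    fix z k assume zk: "(z, k + cnj l *\<^sub>C z) \<in> adj A"
    obtain x where x: "(x, z) \<in> op_shift A l" using surjA by blast
    hence xA: "(x, z + l *\<^sub>C x) \<in> A" by (simp add: op_shift_iff)
    have "cinner (z + l *\<^sub>C x) z = cinner x (k + cnj l *\<^sub>C z)"
      using zk xA unfolding adj_iff by blast
    hence "cinner z z + l * cinner x z = cinner x k + l * cinner x z"
      by (simp add: cinner_add_left cinner_add_right cinner_scaleC_left cinner_scaleC_right)
    hence zz: "cinner z z = cinner x k" by simp
    have "(norm z)^2 = Re (cinner x k)" using zz by (simp add: norm_sq_cinner)
    also have "\<dots> \<le> cmod (cinner x k)" by (rule complex_Re_le_cmod)
    also have "\<dots> \<le> norm x * norm k" by (rule cauchy_schwarz)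
    also have "\<dots> \<le> C * norm z * norm k" using bA[OF x] by (simp add: mult_right_mono)
    finally have le: "norm z * norm z \<le> (C * norm k) * norm z" by (simp add: power2_eq_square algebra_simps)
    show "norm z \<le> C * norm k"
    proof (cases "norm z = 0")
      case True thus ?thesis using Cnn by simp
    next
      case False
      hence "norm z > 0" by simp
      with le show ?thesis by simp
    qed
  qed
  have sub: "csubspace V"
    unfolding csubspace_def
  proof (intro conjI ballI allI)
    show "0 \<in> V" unfolding Vmem using adj_zero[of A] by (intro exI[of _ 0]) simp
  next
    fix x y assume "x \<in> V" "y \<in> V"
    then obtain z1 z2 where "(z1, x + cnj l *\<^sub>C z1) \<in> adj A" "(z2, y + cnj l *\<^sub>C z2) \<in> adj A"
      unfolding Vmem by blast
    from adj_add[OF this] show "x + y \<in> V" unfolding Vmem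
      by (intro exI[of _ "z1 + z2"]) (simp add: scaleC_add_right algebra_simps)
  next
    fix c x assume "x \<in> V"
    then obtain z where "(z, x + cnj l *\<^sub>C z) \<in> adj A" unfolding Vmem by blast
    from adj_scale[OF this, of c] show "c *\<^sub>C x \<in> V" unfolding Vmem
      by (intro exI[of _ "c *\<^sub>C z"]) (simp add: scaleC_add_right scaleC_comm)
  qed
  have cl: "closed V"
    unfolding closed_sequential_limits
  proof (intro allI impI, elim conjE)
    fix ks k assume ksV: "\<forall>n. ks n \<in> V" and lim: "ks \<longlonglongrightarrow> k"
    then obtain zs where zs: "\<And>n. (zs n, ks n + cnj l *\<^sub>C zs n) \<in> adj A"
      unfolding Vmem by metis
    have dz: "\<And>m n. norm (zs m - zs n) \<le> C * norm (ks m - ks n)"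
    proof -
      fix m n
      have "(zs m - zs n, (ks m + cnj l *\<^sub>C zs m) - (ks n + cnj l *\<^sub>C zs n)) \<in> adj A"
        by (rule adj_diff[OF zs zs])
      moreover have "(ks m + cnj l *\<^sub>C zs m) - (ks n + cnj l *\<^sub>C zs n) = (ks m - ks n) + cnj l *\<^sub>C (zs m - zs n)"
        by (simp add: scaleC_diff_right algebra_simps)
      ultimately show "norm (zs m - zs n) \<le> C * norm (ks m - ks n)" using bound by simp
    qed
    have "Cauchy ks" using lim by (rule LIMSEQ_imp_Cauchy)
    have "Cauchy zs"
    proof (rule metric_CauchyI)
      fix e :: real assume e: "e > 0"
      have "e / (C + 1) > 0" using e Cnn by simp
      then obtain M where M: "\<forall>m\<ge>M. \<forall>n\<ge>M. dist (ks m) (ks n) < e / (C + 1)"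
        using \<open>Cauchy ks\<close> unfolding Cauchy_def by blast
      show "\<exists>M. \<forall>m\<ge>M. \<forall>n\<ge>M. dist (zs m) (zs n) < e"
      proof (intro exI allI impI)
        fix m n assume "m \<ge> M" "n \<ge> M"
        hence d: "norm (ks m - ks n) < e / (C + 1)" using M by (simp add: dist_norm)
        have "norm (zs m - zs n) \<le> C * norm (ks m - ks n)" by (rule dz)
        also have "\<dots> \<le> C * (e / (C + 1))" using d Cnn by (intro mult_left_mono) auto
        also have "\<dots> < e" using e Cnn by (simp add: field_simps)
        finally show "dist (zs m) (zs n) < e" by (simp add: dist_norm)
      qed
    qed
    hence "convergent zs" by (rule Cauchy_convergent)
    then obtain z where zlim: "zs \<longlonglongrightarrow> z" unfolding convergent_def by blast
    have "(z, k + cnj l *\<^sub>C z) \<in> adj A"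
      unfolding adj_iff
    proof (intro allI impI)
      fix f kk assume fk: "(f, kk) \<in> A"
      have eq: "\<And>n. cinner kk (zs n) = cinner f (ks n) + l * cinner f (zs n)"
        using zs fk unfolding adj_iff by (simp add: cinner_add_right cinner_scaleC_right)
      have l1: "(\<lambda>n. cinner kk (zs n)) \<longlonglongrightarrow> cinner kk z" by (rule cinner_tendsto_right[OF zlim])
      have l2: "(\<lambda>n. cinner f (ks n) + l * cinner f (zs n)) \<longlonglongrightarrow> cinner f k + l * cinner f z"
        by (intro tendsto_intros cinner_tendsto_right lim zlim)
      have "cinner kk z = cinner f k + l * cinner f z"
        using LIMSEQ_unique[OF l1] l2 unfolding eq by blast
      thus "cinner kk z = cinner f (k + cnj l *\<^sub>C z)"
        by (simp add: cinner_add_right cinner_scaleC_right)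
    qed
    thus "k \<in> V" unfolding Vmem by blast
  qed
  have triv: "\<And>q. (\<forall>w\<in>V. cinner q w = 0) \<Longrightarrow> q = 0"
  proof -
    fix q assume qo: "\<forall>w\<in>V. cinner q w = 0"
    have "(q, l *\<^sub>C q) \<in> adj (adj A)"
      unfolding adj_iff[of q]
    proof (intro allI impI)
      fix z y assume zy: "(z, y) \<in> adj A"
      have "y - cnj l *\<^sub>C z \<in> V" unfolding Vmem using zy by (intro exI[of _ z]) simp
      hence "cinner q (y - cnj l *\<^sub>C z) = 0" using qo by blast
      hence "cinner (y - cnj l *\<^sub>C z) q = 0" using cinner_commute[of "y - cnj l *\<^sub>C z" q] by simp
      thus "cinner y q = cinner z (l *\<^sub>C q)"
        by (simp add: cinner_diff_left cinner_scaleC_left cinner_scaleC_right)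
    qed
    hence "(q, 0) \<in> op_shift A l" using AA by (simp add: op_shift_iff)
    hence "norm q \<le> C * norm (0::'a)" by (rule bA)
    thus "q = 0" by simp
  qed
  have "V = UNIV" by (rule orth_complete[OF sub cl triv])
  thus ?thesis unfolding V_def .
qed



lemma graph_on_iff: "(x, y) \<in> graph_on D F \<longleftrightarrow> x \<in> D \<and> y = F x"
  unfolding graph_on_def by auto
lemma A0_iff: "(x, y) \<in> A0_op domT T G0 \<longleftrightarrow> x \<in> domT \<and> G0 x = 0 \<and> y = T x"
  unfolding A0_op_def graph_on_iff by auto
lemma gamma_iff: "(p, y) \<in> gamma_field domT T G0 l \<longleftrightarrow> y \<in> domT \<and> T y = l *\<^sub>C y \<and> p = G0 y"
  unfolding gamma_field_def converse_iff graph_on_iff by auto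
lemma weyl_iff: "(p, m) \<in> weyl_fun domT T G0 G1 l \<longleftrightarrow>
    (\<exists>w. w \<in> domT \<and> T w = l *\<^sub>C w \<and> p = G0 w \<and> m = G1 w)"
  unfolding weyl_fun_def gamma_iff graph_on_iff relcomp_unfold by auto
lemma AB_iff: "(x, y) \<in> A_B_op domT T G0 G1 B \<longleftrightarrow>
    x \<in> domT \<and> G1 x \<in> Domain B \<and> rel_app B (G1 x) = G0 x \<and> y = T x"
  unfolding A_B_op_def graph_on_iff by auto
lemma ident_minus_iff: "(x, z) \<in> ident_minus R \<longleftrightarrow> (\<exists>y. (x, y) \<in> R \<and> z = x - y)"
  unfolding ident_minus_def by auto

lemma rel_app_eqI: "(x, y) \<in> R \<Longrightarrow> (\<And>y'. (x, y') \<in> R \<Longrightarrow> y' = y) \<Longrightarrow> rel_app R x = y"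
  unfolding rel_app_def by (rule the_equality)
lemma rel_app_sv: "single_valued R \<Longrightarrow> (x, y) \<in> R \<Longrightarrow> rel_app R x = y"
  by (rule rel_app_eqI) (auto simp: single_valued_def)

lemma lin_zero: "csubspace D \<Longrightarrow> lin_on D F \<Longrightarrow> F 0 = 0"
proof -
  assume "csubspace D" "lin_on D F"
  hence "F ((0::complex) *\<^sub>C 0) = 0 *\<^sub>C F 0" unfolding csubspace_def lin_on_def by blast
  thus "F 0 = 0" by simp
qed
lemma lin_add: "lin_on D F \<Longrightarrow> x \<in> D \<Longrightarrow> y \<in> D \<Longrightarrow> F (x + y) = F x + F y"
  unfolding lin_on_def by blast
lemma lin_scale: "lin_on D F \<Longrightarrow> x \<in> D \<Longrightarrow> F (c *\<^sub>C x) = c *\<^sub>C F x"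
  unfolding lin_on_def by blast
lemma lin_diff: "csubspace D \<Longrightarrow> lin_on D F \<Longrightarrow> x \<in> D \<Longrightarrow> y \<in> D \<Longrightarrow> F (x - y) = F x - F y"
proof -
  assume a: "csubspace D" "lin_on D F" "x \<in> D" "y \<in> D"
  hence my: "(-1) *\<^sub>C y \<in> D" unfolding csubspace_def by blast
  have "F (x - y) = F (x + (-1) *\<^sub>C y)" by simp
  also have "\<dots> = F x + F ((-1) *\<^sub>C y)" by (rule lin_add[OF a(2) a(3) my])
  also have "F ((-1) *\<^sub>C y) = (-1) *\<^sub>C F y" by (rule lin_scale[OF a(2) a(4)])
  finally show ?thesis by simp
qed
lemma csubspace_add: "csubspace U \<Longrightarrow> x \<in> U \<Longrightarrow> y \<in> U \<Longrightarrow> x + y \<in> U"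
  unfolding csubspace_def by blast
lemma csubspace_zero: "csubspace U \<Longrightarrow> 0 \<in> U"
  unfolding csubspace_def by blast

lemma lin_rel_add: "linear_rel R \<Longrightarrow> (x, y) \<in> R \<Longrightarrow> (u, v) \<in> R \<Longrightarrow> (x + u, y + v) \<in> R"
  unfolding linear_rel_def by blast
lemma lin_rel_diff: "linear_rel R \<Longrightarrow> (x, y) \<in> R \<Longrightarrow> (u, v) \<in> R \<Longrightarrow> (x - u, y - v) \<in> R"
proof -
  assume a: "linear_rel R" "(x, y) \<in> R" "(u, v) \<in> R"
  hence "((-1) *\<^sub>C u, (-1) *\<^sub>C v) \<in> R" unfolding linear_rel_def by blast
  hence "(-u, -v) \<in> R" by simp
  from lin_rel_add[OF a(1) a(2) this] show ?thesis by simp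
qed

lemma adj_unique:
  fixes R :: "('a::complex_inner \<times> 'b::complex_inner) set"
  assumes D: "closure (Domain R) = UNIV" and h1: "(g, h1) \<in> adj R" and h2: "(g, h2) \<in> adj R"
  shows "h1 = h2"
proof -
  define p where "p = h1 - h2"
  have orth: "\<And>a. a \<in> Domain R \<Longrightarrow> cinner a p = 0"
  proof -
    fix a assume "a \<in> Domain R"
    then obtain k where "(a, k) \<in> R" by blast
    hence "cinner k g = cinner a h1" "cinner k g = cinner a h2" using h1 h2 unfolding adj_iff by blast+
    thus "cinner a p = 0" by (simp add: p_def cinner_diff_right)
  qed
  have "p \<in> closure (Domain R)" using D by simp
  then obtain X where X: "\<And>n. X n \<in> Domain R" "X \<longlonglongrightarrow> p"
    unfolding closure_sequential by blast
  have "(\<lambda>n. cinner (X n) p) \<longlonglongrightarrow> cinner p p" by (rule cinner_tendsto_left[OF X(2)])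
  moreover have "(\<lambda>n. cinner (X n) p) = (\<lambda>n. 0)" using orth X(1) by auto
  ultimately have "cinner p p = 0" using LIMSEQ_unique tendsto_const by metis
  hence "p = 0" using cinner_self_eq_zero by blast
  thus ?thesis by (simp add: p_def)
qed



lemma part_i:
  fixes domT domTt :: "'h::complex_hilbert set"
    and T Tt :: "'h \<Rightarrow> 'h"
    and G0 G1 Gt0 Gt1 :: "'h \<Rightarrow> 'g::complex_hilbert"
    and B :: "('g \<times> 'g) set"
    and l :: complex and f :: 'h
  assumes sT: "csubspace domT" and lT: "lin_on domT T"
    and sTt: "csubspace domTt" and lTt: "lin_on domTt Tt"
    and lG0: "lin_on domT G0" and lG1: "lin_on domT G1" and lGt0: "lin_on domTt Gt0"
    and G: "\<forall>u\<in>domT. \<forall>v\<in>domTt.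
              cinner (T u) v - cinner u (Tt v) = cinner (G1 u) (Gt0 v) - cinner (G0 u) (Gt1 v)"
    and D: "closure (Gt0 ` domTt) = UNIV"
    and M1: "adj (A0_op domT T G0) = A0_op domTt Tt Gt0"
    and M2: "adj (A0_op domTt Tt Gt0) = A0_op domT T G0"
    and linB: "lin_op B"
    and l_res: "l \<in> resolvent_set (A0_op domT T G0)"
  shows
   "(l \<notin> point_spectrum (A_B_op domT T G0 G1 B) \<and>
      (\<exists>h. (f, h) \<in> adj (gamma_field domTt Tt Gt0 (cnj l)) \<and> h \<in> Domain B \<and>
           rel_app B h \<in> Range (ident_minus (weyl_fun domT T G0 G1 l O B))))
    \<longrightarrow> f \<in> Range (op_shift (A_B_op domT T G0 G1 B) l) \<and>
        rel_app (converse (op_shift (A_B_op domT T G0 G1 B) l)) f =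
          rel_app (converse (op_shift (A0_op domT T G0) l)) f +
          rel_app (gamma_field domT T G0 l)
            (rel_app (converse (ident_minus (weyl_fun domT T G0 G1 l O B)))
              (rel_app B (rel_app (adj (gamma_field domTt Tt Gt0 (cnj l))) f)))"
proof (intro impI, elim conjE exE)
  define A0 where "A0 = A0_op domT T G0"
  define At where "At = A0_op domTt Tt Gt0"
  define AB where "AB = A_B_op domT T G0 G1 B"
  define gt where "gt = gamma_field domTt Tt Gt0 (cnj l)"
  define MB where "MB = weyl_fun domT T G0 G1 l O B"
  fix h
  assume nsp: "l \<notin> point_spectrum (A_B_op domT T G0 G1 B)"
    and fh: "(f, h) \<in> adj (gamma_field domTt Tt Gt0 (cnj l))" and hB: "h \<in> Domain B"
    and bR: "rel_app B h \<in> Range (ident_minus (weyl_fun domT T G0 G1 l O B))"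
  have svB: "single_valued B" and lrB: "linear_rel B" using linB unfolding lin_op_def by auto
  have Bapp: "\<And>x y. (x, y) \<in> B \<Longrightarrow> rel_app B x = y" using svB by (rule rel_app_sv)
  have surj0: "Range (op_shift A0 l) = UNIV" and sv0: "single_valued (converse (op_shift A0 l))"
    and "\<exists>C. \<forall>(x, y) \<in> op_shift A0 l. norm x \<le> C * norm y"
    using l_res unfolding resolvent_set_def A0_def by auto
  then obtain C0 where C0: "\<forall>(x, y) \<in> op_shift A0 l. norm x \<le> C0 * norm y" by blast
  have inj0: "\<And>x. x \<in> domT \<Longrightarrow> G0 x = 0 \<Longrightarrow> T x = l *\<^sub>C x \<Longrightarrow> x = 0"
  proof -
    fix x assume "x \<in> domT" "G0 x = 0" "T x = l *\<^sub>C x"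
    hence "(x, 0) \<in> op_shift A0 l" unfolding op_shift_iff A0_def A0_iff by simp
    hence "norm x \<le> C0 * norm (0::'h)" using C0 by blast
    thus "x = 0" by simp
  qed
  have eigen: "\<And>x. x \<in> domT \<Longrightarrow> (G1 x, G0 x) \<in> B \<Longrightarrow> T x = l *\<^sub>C x \<Longrightarrow> x = 0"
  proof (rule ccontr)
    fix x assume x: "x \<in> domT" "(G1 x, G0 x) \<in> B" "T x = l *\<^sub>C x" and nz: "x \<noteq> 0"
    have "(x, l *\<^sub>C x) \<in> A_B_op domT T G0 G1 B"
      unfolding AB_iff using x Bapp by auto
    hence "l \<in> point_spectrum (A_B_op domT T G0 G1 B)" unfolding point_spectrum_def using nz by blast
    thus False using nsp by blast
  qed
  have AA: "adj (adj A0) = A0" using M1 M2 unfolding A0_def by simp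
  have surjt: "Range (op_shift At (cnj l)) = UNIV"
    using adj_shift_surj[OF AA l_res[folded A0_def]] M1 unfolding A0_def At_def by simp
  have dom_gt: "Domain gt = Gt0 ` {y \<in> domTt. Tt y = cnj l *\<^sub>C y}"
    unfolding gt_def by (auto simp: gamma_iff Domain_iff)
  have "Gt0 ` domTt \<subseteq> Domain gt"
  proof
    fix p assume "p \<in> Gt0 ` domTt"
    then obtain y where y: "y \<in> domTt" "p = Gt0 y" by blast
    obtain z where "(z, Tt y - cnj l *\<^sub>C y) \<in> op_shift At (cnj l)" using surjt by blast
    hence z: "z \<in> domTt" "Gt0 z = 0" "Tt y - cnj l *\<^sub>C y + cnj l *\<^sub>C z = Tt z"
      unfolding op_shift_iff At_def A0_iff by auto
    have yz: "y - z \<in> domTt" using sTt y z by (simp add: csubspace_diff)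
    have "Tt (y - z) = Tt y - Tt z" by (rule lin_diff[OF sTt lTt y(1) z(1)])
    also have "\<dots> = cnj l *\<^sub>C (y - z)" using z(3) by (simp add: scaleC_diff_right algebra_simps)
    finally have e1: "Tt (y - z) = cnj l *\<^sub>C (y - z)" .
    have "Gt0 (y - z) = Gt0 y" using lin_diff[OF sTt lGt0 y(1) z(1)] z(2) by simp
    thus "p \<in> Domain gt" unfolding dom_gt using yz e1 y(2) by (intro image_eqI[of _ _ "y - z"]) auto
  qed
  hence "closure (Gt0 ` domTt) \<subseteq> closure (Domain gt)" by (rule closure_mono)
  hence Dgt: "closure (Domain gt) = UNIV" using D by blast
  obtain u where "(u, f) \<in> op_shift A0 l" using surj0 by blast
  hence u: "u \<in> domT" "G0 u = 0" "T u = f + l *\<^sub>C u" and uf: "(u, f) \<in> op_shift A0 l"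
    unfolding op_shift_iff A0_def A0_iff by auto
  have res0: "rel_app (converse (op_shift A0 l)) f = u"
    using rel_app_sv[OF sv0] uf by simp
  have fG1u: "(f, G1 u) \<in> adj gt"
    unfolding adj_iff
  proof (intro allI impI)
    fix p y assume "(p, y) \<in> gt"
    hence y: "y \<in> domTt" "Tt y = cnj l *\<^sub>C y" "p = Gt0 y" unfolding gt_def gamma_iff by auto
    have "cinner (T u) y - cinner u (Tt y) = cinner (G1 u) (Gt0 y) - cinner (G0 u) (Gt1 y)"
      using G u(1) y(1) by blast
    hence "cinner f y = cinner (G1 u) (Gt0 y)"
      using u y by (simp add: cinner_add_left cinner_scaleC_left cinner_scaleC_right)
    hence "cnj (cinner f y) = cnj (cinner (G1 u) (Gt0 y))" by simp
    moreover have "cinner y f = cnj (cinner f y)" by (rule cinner_commute)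
    moreover have "cinner (Gt0 y) (G1 u) = cnj (cinner (G1 u) (Gt0 y))" by (rule cinner_commute)
    ultimately show "cinner y f = cinner p (G1 u)" using y(3) by simp
  qed
  have hG: "h = G1 u" using adj_unique[OF Dgt] fh fG1u unfolding gt_def by blast
  have resgt: "rel_app (adj gt) f = G1 u"
    by (rule rel_app_eqI[OF fG1u]) (use adj_unique[OF Dgt] fG1u in blast)
  obtain b where hb: "(h, b) \<in> B" using hB by blast
  have bapp: "rel_app B h = b" using Bapp[OF hb] .
  obtain p where "(p, b) \<in> ident_minus MB" using bR bapp unfolding MB_def by auto
  then obtain ps where pps: "(p, ps) \<in> MB" "b = p - ps" unfolding ident_minus_iff by blast
  then obtain mm where "(p, mm) \<in> weyl_fun domT T G0 G1 l" "(mm, ps) \<in> B" unfolding MB_def by blast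
  then obtain w where w: "w \<in> domT" "T w = l *\<^sub>C w" "p = G0 w" "mm = G1 w" and mps: "(mm, ps) \<in> B"
    unfolding weyl_iff by blast
  define v where "v = u + w"
  have vT: "v \<in> domT" unfolding v_def using sT u(1) w(1) by (rule csubspace_add)
  have G1v: "G1 v = h + mm" unfolding v_def hG using lin_add[OF lG1 u(1) w(1)] w(4) by simp
  have G0v: "G0 v = p" unfolding v_def using lin_add[OF lG0 u(1) w(1)] u(2) w(3) by simp
  have "(h + mm, b + ps) \<in> B" by (rule lin_rel_add[OF lrB hb mps])
  hence Bv: "(G1 v, G0 v) \<in> B" using G1v G0v pps(2) by simp
  have Tv: "T v = f + l *\<^sub>C v" unfolding v_def using lin_add[OF lT u(1) w(1)] u(3) w(2)
    by (simp add: scaleC_add_right algebra_simps)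
  have vAB: "(v, f) \<in> op_shift AB l"
    unfolding op_shift_iff AB_def AB_iff using vT Bv Bapp[OF Bv] Tv by auto
  have uniqAB: "\<And>v'. (v', f) \<in> op_shift AB l \<Longrightarrow> v' = v"
  proof -
    fix v' assume "(v', f) \<in> op_shift AB l"
    hence v': "v' \<in> domT" "G1 v' \<in> Domain B" "rel_app B (G1 v') = G0 v'" "T v' = f + l *\<^sub>C v'"
      unfolding op_shift_iff AB_def AB_iff by auto
    have Bv': "(G1 v', G0 v') \<in> B" using v'(2,3) Bapp by auto
    have "(G1 v' - G1 v, G0 v' - G0 v) \<in> B" by (rule lin_rel_diff[OF lrB Bv' Bv])
    hence "(G1 (v' - v), G0 (v' - v)) \<in> B"
      using lin_diff[OF sT lG1 v'(1) vT] lin_diff[OF sT lG0 v'(1) vT] by simp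
    moreover have "v' - v \<in> domT" using sT v'(1) vT by (rule csubspace_diff)
    moreover have "T (v' - v) = l *\<^sub>C (v' - v)"
      using lin_diff[OF sT lT v'(1) vT] v'(4) Tv by (simp add: scaleC_diff_right)
    ultimately have "v' - v = 0" using eigen by blast
    thus "v' = v" by simp
  qed
  have resAB: "rel_app (converse (op_shift AB l)) f = v"
  proof (rule rel_app_eqI)
    show "(f, v) \<in> converse (op_shift AB l)" using vAB by simp
  next
    fix v' assume "(f, v') \<in> converse (op_shift AB l)"
    thus "v' = v" by (intro uniqAB) simp
  qed
  have resIM: "rel_app (converse (ident_minus MB)) b = p"
  proof (rule rel_app_eqI)
    show "(b, p) \<in> converse (ident_minus MB)" unfolding converse_iff ident_minus_iff using pps by blast
  next
    fix p2 assume "(b, p2) \<in> converse (ident_minus MB)"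
    then obtain ps2 where pps2: "(p2, ps2) \<in> MB" "b = p2 - ps2" unfolding converse_iff ident_minus_iff by blast
    then obtain mm2 where "(p2, mm2) \<in> weyl_fun domT T G0 G1 l" "(mm2, ps2) \<in> B" unfolding MB_def by blast
    then obtain w2 where w2: "w2 \<in> domT" "T w2 = l *\<^sub>C w2" "p2 = G0 w2" "mm2 = G1 w2" and mps2: "(mm2, ps2) \<in> B"
      unfolding weyl_iff by blast
    have "(mm2 - mm, ps2 - ps) \<in> B" by (rule lin_rel_diff[OF lrB mps2 mps])
    moreover have "ps2 - ps = p2 - p"
    proof -
      have e: "(p - ps) - (p2 - ps2) = 0" using pps(2) pps2(2) by simp
      have "ps2 - ps = (p2 - p) + ((p - ps) - (p2 - ps2))" by (simp add: algebra_simps)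
      thus ?thesis using e by simp
    qed
    moreover have "G1 (w2 - w) = mm2 - mm" using lin_diff[OF sT lG1 w2(1) w(1)] w(4) w2(4) by simp
    moreover have "G0 (w2 - w) = p2 - p" using lin_diff[OF sT lG0 w2(1) w(1)] w(3) w2(3) by simp
    ultimately have "(G1 (w2 - w), G0 (w2 - w)) \<in> B" by simp
    moreover have "w2 - w \<in> domT" using sT w2(1) w(1) by (rule csubspace_diff)
    moreover have "T (w2 - w) = l *\<^sub>C (w2 - w)"
      using lin_diff[OF sT lT w2(1) w(1)] w(2) w2(2) by (simp add: scaleC_diff_right)
    ultimately have "w2 - w = 0" using eigen by blast
    hence "w2 = w" by simp
    thus "p2 = p" using w(3) w2(3) by simp
  qed
  have resg: "rel_app (gamma_field domT T G0 l) p = w"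
  proof (rule rel_app_eqI)
    show "(p, w) \<in> gamma_field domT T G0 l" unfolding gamma_iff using w by blast
  next
    fix w2 assume "(p, w2) \<in> gamma_field domT T G0 l"
    hence w2: "w2 \<in> domT" "T w2 = l *\<^sub>C w2" "p = G0 w2" unfolding gamma_iff by auto
    have "w2 - w \<in> domT" using sT w2(1) w(1) by (rule csubspace_diff)
    moreover have "G0 (w2 - w) = 0" using lin_diff[OF sT lG0 w2(1) w(1)] w(3) w2(3) by simp
    moreover have "T (w2 - w) = l *\<^sub>C (w2 - w)"
      using lin_diff[OF sT lT w2(1) w(1)] w(2) w2(2) by (simp add: scaleC_diff_right)
    ultimately have "w2 - w = 0" using inj0 by blast
    thus "w2 = w" by simp
  qed
  have "f \<in> Range (op_shift AB l)" using vAB by blast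
  moreover have "rel_app (converse (op_shift AB l)) f =
      rel_app (converse (op_shift A0 l)) f + rel_app (gamma_field domT T G0 l)
        (rel_app (converse (ident_minus MB)) (rel_app B (rel_app (adj gt) f)))"
    unfolding resAB res0 resgt hG[symmetric] bapp resIM resg v_def ..
  ultimately show "f \<in> Range (op_shift (A_B_op domT T G0 G1 B) l) \<and>
        rel_app (converse (op_shift (A_B_op domT T G0 G1 B) l)) f =
          rel_app (converse (op_shift (A0_op domT T G0) l)) f +
          rel_app (gamma_field domT T G0 l)
            (rel_app (converse (ident_minus (weyl_fun domT T G0 G1 l O B)))
              (rel_app B (rel_app (adj (gamma_field domTt Tt Gt0 (cnj l))) f)))"
    unfolding AB_def A0_def MB_def gt_def by blast
qed



theorem corollary4p5:
  fixes S St :: "('h::complex_hilbert \<times> 'h) set"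
    and domT domTt :: "'h set"
    and T Tt :: "'h \<Rightarrow> 'h"
    and G0 G1 Gt0 Gt1 :: "'h \<Rightarrow> 'g::complex_hilbert"
    and B Bt :: "('g \<times> 'g) set"
    and l mu :: complex
    and f g :: 'h
  assumes separable: "\<exists>D::'h set. countable D \<and> closure D = UNIV"
    and pair: "adjoint_pair S St"
    and coreT: "core_of domT T (adj S)"
    and coreTt: "core_of domTt Tt (adj St)"
    and linG: "lin_on domT G0" "lin_on domT G1" "lin_on domTt Gt0" "lin_on domTt Gt1"
    and G: "\<forall>u\<in>domT. \<forall>v\<in>domTt.
              cinner (T u) v - cinner u (Tt v) = cinner (G1 u) (Gt0 v) - cinner (G0 u) (Gt1 v)"
    and D: "closure (G0 ` domT) = UNIV" "closure (Gt0 ` domTt) = UNIV"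
    and M: "adj (A0_op domT T G0) = A0_op domTt Tt Gt0" "adj (A0_op domTt Tt Gt0) = A0_op domT T G0"
    and rho_ne: "resolvent_set (A0_op domT T G0) \<noteq> {}"
    and linB: "lin_op B" "lin_op Bt"
    and l_res: "l \<in> resolvent_set (A0_op domT T G0)"
    and mu_res: "mu \<in> resolvent_set (A0_op domTt Tt Gt0)"
  shows
   "((l \<notin> point_spectrum (A_B_op domT T G0 G1 B) \<and>
      (\<exists>h. (f, h) \<in> adj (gamma_field domTt Tt Gt0 (cnj l)) \<and> h \<in> Domain B \<and>
           rel_app B h \<in> Range (ident_minus (weyl_fun domT T G0 G1 l O B))))
    \<longrightarrow> f \<in> Range (op_shift (A_B_op domT T G0 G1 B) l) \<and>
        rel_app (converse (op_shift (A_B_op domT T G0 G1 B) l)) f =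
          rel_app (converse (op_shift (A0_op domT T G0) l)) f +
          rel_app (gamma_field domT T G0 l)
            (rel_app (converse (ident_minus (weyl_fun domT T G0 G1 l O B)))
              (rel_app B (rel_app (adj (gamma_field domTt Tt Gt0 (cnj l))) f))))
   \<and>
   ((mu \<notin> point_spectrum (A_B_op domTt Tt Gt0 Gt1 Bt) \<and>
      (\<exists>h. (g, h) \<in> adj (gamma_field domT T G0 (cnj mu)) \<and> h \<in> Domain Bt \<and>
           rel_app Bt h \<in> Range (ident_minus (weyl_fun domTt Tt Gt0 Gt1 mu O Bt))))
    \<longrightarrow> g \<in> Range (op_shift (A_B_op domTt Tt Gt0 Gt1 Bt) mu) \<and>
        rel_app (converse (op_shift (A_B_op domTt Tt Gt0 Gt1 Bt) mu)) g =
          rel_app (converse (op_shift (A0_op domTt Tt Gt0) mu)) g +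
          rel_app (gamma_field domTt Tt Gt0 mu)
            (rel_app (converse (ident_minus (weyl_fun domTt Tt Gt0 Gt1 mu O Bt)))
              (rel_app Bt (rel_app (adj (gamma_field domT T G0 (cnj mu))) g))))"
proof (rule conjI)
  have sT: "csubspace domT" and lT: "lin_on domT T" using coreT unfolding core_of_def by auto
  have sTt: "csubspace domTt" and lTt: "lin_on domTt Tt" using coreTt unfolding core_of_def by auto
  have G': "\<forall>u\<in>domTt. \<forall>v\<in>domT.
      cinner (Tt u) v - cinner u (T v) = cinner (Gt1 u) (G0 v) - cinner (Gt0 u) (G1 v)"
  proof (intro ballI)
    fix u v assume u: "u \<in> domTt" and v: "v \<in> domT"
    have e: "cinner (T v) u - cinner v (Tt u) = cinner (G1 v) (Gt0 u) - cinner (G0 v) (Gt1 u)"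
      using G u v by blast
    have "cnj (cinner (T v) u - cinner v (Tt u)) = cnj (cinner (G1 v) (Gt0 u) - cinner (G0 v) (Gt1 u))"
      using e by simp
    hence "cinner u (T v) - cinner (Tt u) v = cinner (Gt0 u) (G1 v) - cinner (Gt1 u) (G0 v)"
      by (simp add: cinner_commute[symmetric])
    thus "cinner (Tt u) v - cinner u (T v) = cinner (Gt1 u) (G0 v) - cinner (Gt0 u) (G1 v)"
      by (simp add: algebra_simps)
  qed
  show "(l \<notin> point_spectrum (A_B_op domT T G0 G1 B) \<and>
      (\<exists>h. (f, h) \<in> adj (gamma_field domTt Tt Gt0 (cnj l)) \<and> h \<in> Domain B \<and>
           rel_app B h \<in> Range (ident_minus (weyl_fun domT T G0 G1 l O B))))
    \<longrightarrow> f \<in> Range (op_shift (A_B_op domT T G0 G1 B) l) \<and>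
        rel_app (converse (op_shift (A_B_op domT T G0 G1 B) l)) f =
          rel_app (converse (op_shift (A0_op domT T G0) l)) f +
          rel_app (gamma_field domT T G0 l)
            (rel_app (converse (ident_minus (weyl_fun domT T G0 G1 l O B)))
              (rel_app B (rel_app (adj (gamma_field domTt Tt Gt0 (cnj l))) f)))"
    by (rule part_i[OF sT lT sTt lTt linG(1) linG(2) linG(3) G D(2) M(1) M(2) linB(1) l_res])
  show "(mu \<notin> point_spectrum (A_B_op domTt Tt Gt0 Gt1 Bt) \<and>
      (\<exists>h. (g, h) \<in> adj (gamma_field domT T G0 (cnj mu)) \<and> h \<in> Domain Bt \<and>
           rel_app Bt h \<in> Range (ident_minus (weyl_fun domTt Tt Gt0 Gt1 mu O Bt))))
    \<longrightarrow> g \<in> Range (op_shift (A_B_op domTt Tt Gt0 Gt1 Bt) mu) \<and>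
        rel_app (converse (op_shift (A_B_op domTt Tt Gt0 Gt1 Bt) mu)) g =
          rel_app (converse (op_shift (A0_op domTt Tt Gt0) mu)) g +
          rel_app (gamma_field domTt Tt Gt0 mu)
            (rel_app (converse (ident_minus (weyl_fun domTt Tt Gt0 Gt1 mu O Bt)))
              (rel_app Bt (rel_app (adj (gamma_field domT T G0 (cnj mu))) g)))"
    by (rule part_i[OF sTt lTt sT lT linG(3) linG(4) linG(1) G' D(1) M(2) M(1) linB(2) mu_res])
qed

end
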